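(* Let $\omega\in\mathbb{R}^d$ with $\nu(\omega;\tau)<\infty$, let $A>0$ and $N\ge1$. If $2\tau>d$, then $\lambda=1$ is a point of (two-dimensional Lebesgue) density of $\Lambda(A;\omega,\tau,N)\subseteq\mathbb{C}$, i.e. $\lim_{r\to0}\frac{\mathrm{area}(\Lambda\cap B(1,r))}{\mathrm{area}(B(1,r))}=1$. If $\tau>d$, then $1$ is a point of (one-dimensional Lebesgue) density of $\Lambda(A;\omega,\tau,N)\cap\mathbb{S}^1$ in the unit circle $\mathbb{S}^1$.
   Context: $|k|=\sum_i|k_i|$; $\nu(\omega;\tau)=\sup_{k\in\mathbb{Z}^d\setminus\{0\}}|e^{2\pi ik\cdot\omega}-1|^{-1}|k|^{-\tau}$; $\nu(\lambda;\omega,\tau)=\sup_{k\in\mathbb{Z}^d\setminus\{0\}}|e^{2\pi ik\cdot\omega}-\lambda|^{-1}|k|^{-\tau}$ (value $\infty$ allowed). $\Lambda(A;\omega,\tau,N)=\{\lambda\in\mathbb{C}:\nu(\lambda;\omega,\tau)|\lambda-1|^{N+1}\le A\}$. $B(1,r)$ is the disk of radius $r$ centered at $1$. *)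

theory Defs
  imports "HOL-Analysis.Analysis"
begin

definition l1norm :: "int ^ 'd \<Rightarrow> real" where
  "l1norm k = (\<Sum>i\<in>UNIV. \<bar>real_of_int (k $ i)\<bar>)"

definition kdot :: "int ^ 'd \<Rightarrow> real ^ 'd \<Rightarrow> real" where
  "kdot k \<omega> = (\<Sum>i\<in>UNIV. real_of_int (k $ i) * \<omega> $ i)"

definition nu_lam :: "complex \<Rightarrow> real ^ 'd \<Rightarrow> real \<Rightarrow> ereal" where
  "nu_lam l \<omega> \<tau> =
     (SUP k\<in>{k :: int ^ 'd. k \<noteq> 0}.
        (let z = exp (2 * pi * \<i> * complex_of_real (kdot k \<omega>))
         in if z = l then \<infinity>
            else ereal (1 / (cmod (z - l) * l1norm k powr \<tau>))))"

definition nu :: "real ^ 'd \<Rightarrow> real \<Rightarrow> ereal" where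
  "nu \<omega> \<tau> = nu_lam 1 \<omega> \<tau>"

definition Lam :: "real \<Rightarrow> real ^ 'd \<Rightarrow> real \<Rightarrow> nat \<Rightarrow> complex set" where
  "Lam A \<omega> \<tau> N = {l. nu_lam l \<omega> \<tau> * ereal (cmod (l - 1) ^ (N + 1)) \<le> ereal A}"

end

theory Submission
  imports Defs
begin


lemma l1norm_ge1: fixes k :: "int ^ 'd" assumes "k \<noteq> 0" shows "l1norm k \<ge> 1"
proof -
  obtain i where i: "k $ i \<noteq> 0" using assms by (metis vec_eq_iff zero_index)
  have "1 \<le> \<bar>real_of_int (k $ i)\<bar>" using i by linarith
  also have "\<dots> \<le> l1norm k" unfolding l1norm_def
    by (rule member_le_sum) auto
  finally show ?thesis .
qed

definition zz :: "real ^ 'd \<Rightarrow> int ^ 'd \<Rightarrow> complex" where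
  "zz \<omega> k = exp (2 * pi * \<i> * complex_of_real (kdot k \<omega>))"

lemma ereal_mult_le_iff: fixes X :: ereal assumes "c > 0"
  shows "X * ereal c \<le> ereal A \<longleftrightarrow> X \<le> ereal (A / c)"
  using assms by (cases X) (auto simp: pos_le_divide_eq)

lemma Lam_iff:
  fixes \<omega> :: "real ^ 'd"
  assumes "A > 0"
  shows "l \<in> Lam A \<omega> \<tau> N \<longleftrightarrow>
    (\<forall>k. k \<noteq> 0 \<longrightarrow> cmod (l - 1) ^ (N+1) \<le> A * cmod (zz \<omega> k - l) * l1norm k powr \<tau>)"
proof (cases "l = 1")
  case True
  have "nu_lam 1 \<omega> \<tau> * ereal 0 \<le> ereal A" using assms by (cases "nu_lam 1 \<omega> \<tau>") auto
  then show ?thesis using assms True by (simp add: Lam_def)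
next
  case False
  define c where "c = cmod (l - 1) ^ (N+1)"
  have c: "c > 0" using False by (simp add: c_def)
  have "l \<in> Lam A \<omega> \<tau> N \<longleftrightarrow> nu_lam l \<omega> \<tau> \<le> ereal (A / c)"
    using ereal_mult_le_iff[OF c, of "nu_lam l \<omega> \<tau>" A] by (simp add: Lam_def c_def)
  also have "\<dots> \<longleftrightarrow> (\<forall>k. k \<noteq> 0 \<longrightarrow> c \<le> A * cmod (zz \<omega> k - l) * l1norm k powr \<tau>)"
    unfolding nu_lam_def SUP_le_iff
  proof (intro iffI allI impI ballI)
    fix k :: "int ^ 'd" assume k: "k \<noteq> 0" and H: "\<forall>k\<in>{k. k \<noteq> 0}.
       (let z = exp (2 * pi * \<i> * complex_of_real (kdot k \<omega>)) in if z = l then \<infinity>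
         else ereal (1 / (cmod (z - l) * l1norm k powr \<tau>))) \<le> ereal (A / c)"
    have P: "l1norm k powr \<tau> > 0" using l1norm_ge1[OF k] by simp
    from H k have H': "(if zz \<omega> k = l then \<infinity>
         else ereal (1 / (cmod (zz \<omega> k - l) * l1norm k powr \<tau>))) \<le> ereal (A / c)"
      by (auto simp: zz_def Let_def)
    then have ne: "zz \<omega> k \<noteq> l" by (auto split: if_splits)
    then have m: "cmod (zz \<omega> k - l) > 0" by simp
    with H' ne have "1 / (cmod (zz \<omega> k - l) * l1norm k powr \<tau>) \<le> A / c" by simp
    then show "c \<le> A * cmod (zz \<omega> k - l) * l1norm k powr \<tau>"
      using m P c by (simp add: field_simps)
  next
    fix k :: "int ^ 'd" assume H: "\<forall>k. k \<noteq> 0 \<longrightarrow> c \<le> A * cmod (zz \<omega> k - l) * l1norm k powr \<tau>"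
      and k: "k \<in> {k. k \<noteq> 0}"
    have P: "l1norm k powr \<tau> > 0" using l1norm_ge1[of k] k by simp
    have Hk: "c \<le> A * cmod (zz \<omega> k - l) * l1norm k powr \<tau>" using H k by auto
    then have ne: "zz \<omega> k \<noteq> l" using c by auto
    then have m: "cmod (zz \<omega> k - l) > 0" by simp
    have "1 / (cmod (zz \<omega> k - l) * l1norm k powr \<tau>) \<le> A / c"
      using m P c Hk by (simp add: field_simps)
    then show "(let z = exp (2 * pi * \<i> * complex_of_real (kdot k \<omega>)) in if z = l then \<infinity>
         else ereal (1 / (cmod (z - l) * l1norm k powr \<tau>))) \<le> ereal (A / c)"
      using ne by (simp add: zz_def Let_def)
  qed
  finally show ?thesis by (simp add: c_def)
qed

lemma cis_sub_one: "cmod (cis x - 1) = 2 * \<bar>sin (x/2)\<bar>"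
proof -
  define y where "y = x/2"
  have x: "x = 2*y" by (simp add: y_def)
  have "cmod (cis x - 1) = sqrt ((cos x - 1)^2 + (sin x)^2)"
    by (simp add: cmod_def)
  also have "(cos x - 1)^2 + (sin x)^2 = (2 * sin y)^2"
    unfolding x sin_double cos_double
    using sin_cos_squared_add[of y] by algebra
  finally have "cmod (cis x - 1) = sqrt ((2 * sin y)^2)" .
  then show ?thesis by (simp only: real_sqrt_abs) (simp add: abs_mult y_def)
qed

lemma sin_lower_pos: fixes y :: real assumes "0 \<le> y" "y \<le> 1" shows "y / 2 \<le> sin y"
proof -
  have "\<forall>t. 0 \<le> t \<and> t \<le> y \<longrightarrow> cos t - 1/2 \<ge> 0"
  proof (intro allI impI)
    fix t assume t: "0 \<le> t \<and> t \<le> y"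
    have "pi / 3 \<ge> 1" using pi_gt3 by simp
    then have "cos (pi/3) \<le> cos t" using t assms pi_gt3
      by (intro cos_monotone_0_pi_le) auto
    then show "cos t - 1/2 \<ge> 0" by (simp add: cos_60)
  qed
  have "(sin 0 - 0/2) \<le> sin y - y/2"
    apply (rule DERIV_nonneg_imp_nondecreasing[of 0 y "\<lambda>t. sin t - t/2"])
    using assms apply simp
    subgoal for t
      using \<open>\<forall>t. _\<close>[rule_format, of t]
      by (intro exI[of _ "cos t - 1/2"]) (auto intro!: derivative_eq_intros)
    done
  then show ?thesis by simp
qed

lemma sin_lower: fixes y :: real assumes "\<bar>y\<bar> \<le> 1" shows "\<bar>y\<bar> / 2 \<le> \<bar>sin y\<bar>"
proof (cases "y \<ge> 0")
  case True then show ?thesis using sin_lower_pos[of y] assms by simp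
next
  case False then show ?thesis using sin_lower_pos[of "-y"] assms by simp
qed

lemma cis_dist: "cmod (cis a - cis b) = cmod (cis (a - b) - 1)"
proof -
  have "cis a - cis b = cis b * (cis (a - b) - 1)"
    by (simp add: algebra_simps cis_mult)
  then show ?thesis by (simp add: norm_mult)
qed

lemma cis_upper: "cmod (cis x - 1) \<le> \<bar>x\<bar>"
  using abs_sin_x_le_abs_x[of "x/2"] by (simp add: cis_sub_one)

lemma cis_lower: assumes "\<bar>a - b\<bar> \<le> 2" shows "\<bar>a - b\<bar> \<le> 2 * cmod (cis a - cis b)"
  using sin_lower[of "(a-b)/2"] assms by (simp add: cis_dist cis_sub_one)

lemma ball_measure: "r \<ge> 0 \<Longrightarrow> measure lebesgue (ball (c::complex) r) = pi * r^2"
  by (simp add: content_ball unit_ball_vol_2)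
lemma summable_int_powr:
  fixes p :: real assumes p: "p > 1"
  shows "(\<lambda>j::int. (1 + \<bar>real_of_int j\<bar>) powr (-p)) summable_on UNIV"
proof -
  define g where "g = (\<lambda>j::int. (1 + \<bar>real_of_int j\<bar>) powr (-p))"
  have s0: "summable (\<lambda>n. real n powr (-p))" using p by (simp add: summable_real_powr_iff)
  have s1: "summable (\<lambda>n. real (Suc n) powr (-p))"
    using s0 summable_Suc_iff[of "\<lambda>n. real n powr (-p)"] by simp
  have s2: "summable (\<lambda>n. real (Suc (Suc n)) powr (-p))"
    using s1 summable_Suc_iff[of "\<lambda>n. real (Suc n) powr (-p)"] by simp
  have e1: "g \<circ> int = (\<lambda>n. real (Suc n) powr (-p))"
  proof (rule ext)
    fix n have "1 + \<bar>real_of_int (int n)\<bar> = real (Suc n)" by simp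
    then show "(g \<circ> int) n = real (Suc n) powr (-p)" by (simp only: g_def o_def)
  qed
  have e2: "g \<circ> (\<lambda>n. - int n - 1) = (\<lambda>n. real (Suc (Suc n)) powr (-p))"
  proof (rule ext)
    fix n have "1 + \<bar>real_of_int (- int n - 1)\<bar> = real (Suc (Suc n))" by simp
    then show "(g \<circ> (\<lambda>n. - int n - 1)) n = real (Suc (Suc n)) powr (-p)" by (simp only: g_def o_def)
  qed
  have i1: "inj_on int UNIV" by (simp add: inj_on_def)
  have i2: "inj_on (\<lambda>n. - int n - 1) UNIV" by (simp add: inj_on_def)
  have "(g \<circ> int) summable_on UNIV" unfolding e1
    using s1 by (subst summable_on_UNIV_nonneg_real_iff) auto
  then have a: "g summable_on range int" by (rule summable_on_reindex[OF i1, THEN iffD2])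
  have "(g \<circ> (\<lambda>n. - int n - 1)) summable_on UNIV" unfolding e2
    using s2 by (subst summable_on_UNIV_nonneg_real_iff) auto
  then have b: "g summable_on range (\<lambda>n. - int n - 1)" by (rule summable_on_reindex[OF i2, THEN iffD2])
  have U: "(UNIV :: int set) = range int \<union> range (\<lambda>n. - int n - 1)"
  proof (rule subset_antisym[OF _ subset_UNIV], rule subsetI)
    fix j :: int
    show "j \<in> range int \<union> range (\<lambda>n. - int n - 1)"
    proof (cases "j \<ge> 0")
      case True then have "j = int (nat j)" by simp
      then have "j \<in> range int" by (rule image_eqI) simp
      then show ?thesis by (rule UnI1)
    next
      case False then have "j = - int (nat (- j - 1)) - 1" by simp
      then have "j \<in> range (\<lambda>n. - int n - 1)" by (rule image_eqI) simp
      then show ?thesis by (rule UnI2)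
    qed
  qed
  have D: "range int \<inter> range (\<lambda>n. - int n - 1) = {}"
  proof (rule equals0I)
    fix j assume "j \<in> range int \<inter> range (\<lambda>n. - int n - 1)"
    then obtain m n where "j = int m" "j = - int n - 1" by blast
    then show False by linarith
  qed
  have "g summable_on (range int \<union> range (\<lambda>n. - int n - 1))"
    by (rule summable_on_Un_disjoint[OF a b D])
  then show ?thesis unfolding g_def[symmetric] U[symmetric] .
qed
lemma summable_prod_vec:
  fixes g :: "int \<Rightarrow> real"
  assumes g: "g summable_on UNIV" and g0: "\<And>j. g j \<ge> 0"
  shows "(\<lambda>k::int^'d. \<Prod>i\<in>UNIV. g (k $ i)) summable_on UNIV"
proof -
  have "Infinite_Sum.abs_summable_on g UNIV" using g g0 by simp
  then have "Infinite_Set_Sum.abs_summable_on g UNIV" by (rule abs_summable_equivalent[THEN iffD1])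
  then have "Infinite_Set_Sum.abs_summable_on (\<lambda>h. \<Prod>i\<in>(UNIV::'d set). g (h i)) (PiE UNIV (\<lambda>_. UNIV))"
    by (intro Infinite_Set_Sum.abs_summable_on_prod_PiE) auto
  then have "Infinite_Set_Sum.abs_summable_on (\<lambda>h. \<Prod>i\<in>(UNIV::'d set). g (h i)) UNIV"
    by (simp only: PiE_UNIV)
  then have "Infinite_Sum.abs_summable_on (\<lambda>h. \<Prod>i\<in>(UNIV::'d set). g (h i)) UNIV"
    by (rule abs_summable_equivalent[THEN iffD2])
  then have S: "(\<lambda>h. \<Prod>i\<in>(UNIV::'d set). g (h i)) summable_on UNIV"
    by (rule abs_summable_summable)
  have inj: "inj_on vec_nth (UNIV :: (int^'d) set)" by (auto simp: inj_on_def vec_eq_iff)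
  have surj: "vec_nth ` (UNIV :: (int^'d) set) = UNIV"
  proof (rule subset_antisym[OF subset_UNIV], rule subsetI)
    fix h :: "'d \<Rightarrow> int"
    have "h = vec_nth (vec_lambda h)" by (simp add: vec_lambda_inverse)
    then show "h \<in> vec_nth ` UNIV" by (rule image_eqI) simp
  qed
  have "(\<lambda>h. \<Prod>i\<in>(UNIV::'d set). g (h i)) summable_on vec_nth ` (UNIV :: (int^'d) set)"
    using S surj by simp
  then have "((\<lambda>h. \<Prod>i\<in>(UNIV::'d set). g (h i)) \<circ> vec_nth) summable_on (UNIV :: (int^'d) set)"
    by (rule summable_on_reindex[OF inj, THEN iffD1])
  then show ?thesis by (simp add: o_def)
qed

lemma l1_le: "\<bar>real_of_int (k $ i)\<bar> \<le> l1norm k"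
  unfolding l1norm_def by (rule member_le_sum) auto

lemma summable_l1:
  fixes s :: real assumes s: "s > CARD('d)"
  shows "(\<lambda>k::int^'d. l1norm k powr (-s)) summable_on {k. k \<noteq> 0}"
proof -
  define p where "p = s / CARD('d)"
  have p: "p > 1" using s by (simp add: p_def)
  have s0: "s > 0" using s by (smt (verit) of_nat_0_le_iff)
  define g where "g = (\<lambda>j::int. (1 + \<bar>real_of_int j\<bar>) powr (-p))"
  have gs: "g summable_on UNIV" unfolding g_def by (rule summable_int_powr[OF p])
  have g0: "\<And>j. g j \<ge> 0" by (simp add: g_def)
  have "(\<lambda>k::int^'d. \<Prod>i\<in>UNIV. g (k $ i)) summable_on UNIV"
    by (rule summable_prod_vec[OF gs g0])
  then have "(\<lambda>k::int^'d. \<Prod>i\<in>UNIV. g (k $ i)) summable_on {k. k \<noteq> 0}"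
    by (rule summable_on_subset_banach) simp
  then have S: "(\<lambda>k::int^'d. 2 powr s * (\<Prod>i\<in>UNIV. g (k $ i))) summable_on {k. k \<noteq> 0}"
    by (rule summable_on_cmult_right)
  show ?thesis
  proof (rule summable_on_comparison_test[OF S])
    fix k :: "int^'d" assume k: "k \<in> {k. k \<noteq> 0}"
    define L where "L = l1norm k"
    have L: "L \<ge> 1" using l1norm_ge1[of k] k by (simp add: L_def)
    have A1: "(\<Prod>i\<in>(UNIV::'d set). (1 + L) powr (-p)) \<le> (\<Prod>i\<in>UNIV. g (k $ i))"
      unfolding g_def
      by (intro prod_mono conjI powr_mono2') (use L p l1_le[of k] in \<open>auto simp: L_def\<close>)
    have A2: "(\<Prod>i\<in>(UNIV::'d set). (1 + L) powr (-p)) = (1 + L) powr (-s)"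
      using L by (simp add: p_def powr_realpow[symmetric] powr_powr)
    have A3: "(2 * L) powr (-s) \<le> (1 + L) powr (-s)"
      using L s0 by (intro powr_mono2') auto
    have A4: "(2 * L) powr (-s) = 2 powr (-s) * L powr (-s)"
      using L by (simp add: powr_mult)
    have A5: "2 powr s * 2 powr (-s) = (1::real)"
      by (simp add: powr_add[symmetric])
    have "L powr (-s) = 2 powr s * (2 * L) powr (-s)"
      unfolding A4 mult.assoc[symmetric] A5 by simp
    also have "\<dots> \<le> 2 powr s * (1 + L) powr (-s)"
      using A3 by (rule mult_left_mono) simp
    also have "\<dots> \<le> 2 powr s * (\<Prod>i\<in>UNIV. g (k $ i))"
      using A1 A2 by (intro mult_left_mono) auto
    finally have "L powr (-s) \<le> 2 powr s * (\<Prod>i\<in>UNIV. g (k $ i))" .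
    then show "l1norm k powr (-s) \<le> 2 powr s * (\<Prod>i\<in>UNIV. g (k $ i))" by (simp add: L_def)
  qed simp
qed

lemma closed_leb: "closed S \<Longrightarrow> S \<in> sets lebesgue" by (simp add: borel_closed)
lemma open_leb: "open S \<Longrightarrow> S \<in> sets lebesgue" by (simp add: borel_open)

lemma union_bound:
  fixes M :: "'a measure" and B :: "nat \<Rightarrow> 'a set" and w :: "nat \<Rightarrow> real"
  assumes B: "\<And>n. B n \<in> sets M" and le: "\<And>n. emeasure M (B n) \<le> ennreal (c * w n)"
    and w: "summable w" and w0: "\<And>n. w n \<ge> 0" and c: "c \<ge> 0"
  shows "emeasure M (\<Union>n. B n) \<le> ennreal (c * suminf w)"
proof -
  have "emeasure M (\<Union>n. B n) \<le> (\<Sum>n. emeasure M (B n))"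
    by (rule emeasure_subadditive_countably) (use B in auto)
  also have "\<dots> \<le> (\<Sum>n. ennreal (c * w n))"
    by (rule suminf_le) (use le in auto)
  also have "\<dots> = ennreal (\<Sum>n. c * w n)"
    by (rule suminf_ennreal2) (use w w0 c in \<open>auto intro: summable_mult\<close>)
  also have "(\<Sum>n. c * w n) = c * suminf w" using w by (rule suminf_mult)
  finally show ?thesis .
qed

lemma infinite_K: "infinite {k :: int ^ 'd. k \<noteq> 0}"
proof -
  have "inj (\<lambda>n::nat. vec (int n) :: int ^ 'd)" by (rule injI) (simp add: vec_eq_iff)
  then have "infinite (range (\<lambda>n::nat. vec (int n) :: int ^ 'd))" by (rule range_inj_infinite)
  then have "infinite (UNIV :: (int ^ 'd) set)" by (rule infinite_super[OF subset_UNIV])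
  then have "infinite (UNIV - {0 :: int ^ 'd})" by (rule infinite_remove)
  moreover have "UNIV - {0 :: int ^ 'd} = {k. k \<noteq> 0}" by blast
  ultimately show ?thesis by simp
qed

lemma enum_K: obtains e :: "nat \<Rightarrow> int ^ 'd" where "bij_betw e UNIV {k. k \<noteq> 0}"
proof -
  have c: "countable {k :: int ^ 'd. k \<noteq> 0}" by (rule countable_subset[OF subset_UNIV]) simp
  obtain f :: "int ^ 'd \<Rightarrow> nat" where "bij_betw f {k :: int ^ 'd. k \<noteq> 0} UNIV"
    using countableE_infinite[OF c infinite_K] by blast
  then have "bij_betw (inv_into {k :: int ^ 'd. k \<noteq> 0} f) UNIV {k. k \<noteq> 0}"
    by (rule bij_betw_inv_into)
  then show ?thesis by (rule that)
qed

lemma summable_enum: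
  fixes e :: "nat \<Rightarrow> int ^ 'd"
  assumes e: "bij_betw e UNIV {k. k \<noteq> 0}" and s: "s > real CARD('d)"
  shows "summable (\<lambda>n. l1norm (e n) powr (-s))"
proof -
  have "(\<lambda>n. l1norm (e n) powr (-s)) summable_on UNIV"
    by (rule summable_on_reindex_bij_betw[OF e, THEN iffD2]) (rule summable_l1[OF s])
  then show ?thesis by (subst (asm) summable_on_UNIV_nonneg_real_iff) auto
qed

lemma Lam_closed:
  fixes \<omega> :: "real ^ 'd"
  assumes A: "A > 0"
  shows "closed (Lam A \<omega> \<tau> N)"
proof -
  have eq: "Lam A \<omega> \<tau> N = (\<Inter>k\<in>{k. k \<noteq> 0}.
      {l. cmod (l - 1) ^ (N+1) \<le> A * cmod (zz \<omega> k - l) * l1norm k powr \<tau>})"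
    using Lam_iff[OF A] by blast
  show ?thesis unfolding eq
    by (intro closed_INT ballI closed_Collect_le continuous_intros)
qed

lemma ball_leb_emeasure: "r \<ge> 0 \<Longrightarrow> emeasure lebesgue (ball (c::complex) r) = ennreal (pi * r^2)"
  using emeasure_eq_measure2[of "ball c r" lebesgue] ball_measure[of r c] lmeasurable_ball[of c r]
  by simp

lemma part1:
  fixes \<omega> :: "real ^ 'd" and \<tau> A :: real and N :: nat
  assumes A: "A > 0" and N: "N \<ge> 1" and t: "2 * \<tau> > real CARD('d)"
  shows "((\<lambda>r. measure lebesgue (Lam A \<omega> \<tau> N \<inter> ball 1 r) / measure lebesgue (ball (1::complex) r))
              \<longlongrightarrow> 1) (at_right 0)"
proof -
  obtain e :: "nat \<Rightarrow> int ^ 'd" where e: "bij_betw e UNIV {k. k \<noteq> 0}" by (rule enum_K)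
  define w where "w n = l1norm (e n) powr (-(2*\<tau>))" for n
  have ws: "summable w" unfolding w_def by (rule summable_enum[OF e t])
  have w0: "\<And>n. w n \<ge> 0" by (simp add: w_def)
  define S where "S = suminf w"
  have S0: "S \<ge> 0" using ws w0 by (simp add: S_def suminf_nonneg)
  have ek: "\<And>n. e n \<noteq> 0" using e by (auto simp: bij_betw_def)
  have ek2: "\<And>k. k \<noteq> 0 \<Longrightarrow> \<exists>n. e n = k"
  proof -
    fix k :: "int ^ 'd" assume "k \<noteq> 0"
    then have "k \<in> e ` UNIV" using e by (simp add: bij_betw_def)
    then show "\<exists>n. e n = k" by blast
  qed
  let ?L = "Lam A \<omega> \<tau> N"
  have Lm: "?L \<in> sets lebesgue" by (rule closed_leb[OF Lam_closed[OF A]])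
  have lower: "1 - S / A^2 * r^(2*N) \<le> measure lebesgue (?L \<inter> ball 1 r) / measure lebesgue (ball (1::complex) r)"
    if r: "r > 0" for r
  proof -
    define \<rho> where "\<rho> n = r^(N+1) / (A * l1norm (e n) powr \<tau>)" for n
    have P: "l1norm (e n) powr \<tau> > 0" for n
    proof -
      have "l1norm (e n) \<ge> 1" by (rule l1norm_ge1[OF ek[of n]])
      then show ?thesis by simp
    qed
    have \<rho>0: "\<And>n. \<rho> n > 0" using P A r by (simp add: \<rho>_def)
    have sub: "ball 1 r - ?L \<subseteq> (\<Union>n. ball (zz \<omega> (e n)) (\<rho> n))"
    proof
      fix l assume l: "l \<in> ball 1 r - ?L"
      then obtain k where k: "k \<noteq> 0" and
        lt: "\<not> cmod (l - 1) ^ (N+1) \<le> A * cmod (zz \<omega> k - l) * l1norm k powr \<tau>"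
        using Lam_iff[OF A] by blast
      obtain n where n: "e n = k" using ek2[OF k] by blast
      have d: "cmod (l - 1) < r" using l by (simp add: dist_norm norm_minus_commute)
      have "cmod (l - 1) ^ (N+1) \<le> r ^ (N+1)" using d by (intro power_mono) auto
      then have "A * cmod (zz \<omega> (e n) - l) * l1norm (e n) powr \<tau> < r ^ (N+1)" using lt n by simp
      then have "cmod (zz \<omega> (e n) - l) < \<rho> n"
        using A P[of n] by (simp add: \<rho>_def field_simps)
      then have "l \<in> ball (zz \<omega> (e n)) (\<rho> n)" by (simp add: dist_norm)
      then show "l \<in> (\<Union>n. ball (zz \<omega> (e n)) (\<rho> n))" by blast
    qed
    define c where "c = pi * r^(2*N+2) / A^2"
    have c0: "c \<ge> 0" using A r by (simp add: c_def)
    have sq: "\<And>n. (l1norm (e n) powr \<tau>)^2 = l1norm (e n) powr (2*\<tau>)"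
      by (simp add: power2_eq_square powr_add[symmetric])
    have wn: "\<And>n. w n = 1 / l1norm (e n) powr (2*\<tau>)"
      by (simp add: w_def powr_minus divide_inverse)
    have em: "emeasure lebesgue (ball (zz \<omega> (e n)) (\<rho> n)) \<le> ennreal (c * w n)" for n
    proof -
      have "pi * (\<rho> n)^2 = c * w n"
        unfolding \<rho>_def c_def wn sq[symmetric] using A P[of n]
        by (simp add: field_simps power_mult_distrib power_add power_mult power2_eq_square)
      then show ?thesis using ball_leb_emeasure[of "\<rho> n" "zz \<omega> (e n)"] \<rho>0[of n] by simp
    qed
    have U: "emeasure lebesgue (\<Union>n. ball (zz \<omega> (e n)) (\<rho> n)) \<le> ennreal (c * S)"
      unfolding S_def by (rule union_bound[OF _ em ws w0 c0]) (simp add: open_leb)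
    have Usets: "(\<Union>n. ball (zz \<omega> (e n)) (\<rho> n)) \<in> sets lebesgue" by (simp add: open_leb open_UN)
    have "emeasure lebesgue (ball 1 r - ?L) \<le> emeasure lebesgue (\<Union>n. ball (zz \<omega> (e n)) (\<rho> n))"
      by (rule emeasure_mono[OF sub Usets])
    then have E: "emeasure lebesgue (ball 1 r - ?L) \<le> ennreal (c * S)" using U by simp
    have X: "measure lebesgue (ball 1 r - ?L) \<le> c * S"
      unfolding measure_def by (rule enn2real_leI) (use E c0 S0 in auto)
    have bf: "ball (1::complex) r \<in> fmeasurable lebesgue" by simp
    have Dm: "ball 1 r - ?L \<in> sets lebesgue" using Lm by (intro sets.Diff) (simp_all add: open_leb)
    have "?L \<inter> ball 1 r = ball 1 r - (ball 1 r - ?L)" by blast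
    then have M: "measure lebesgue (?L \<inter> ball 1 r) = pi * r^2 - measure lebesgue (ball 1 r - ?L)"
      using measurable_measure_Diff[OF bf Dm] ball_measure[of r 1] r by simp
    have pr: "pi * r^2 > 0" using r by simp
    define a where "a = pi * r^2"
    define b where "b = r^(2*N) / A^2"
    have cab: "c = a * b" by (simp add: c_def a_def b_def power_add power2_eq_square)
    have a0: "a \<noteq> 0" using pr unfolding a_def by linarith
    have e2: "1 - b * S = (a - a * b * S) / a" using a0 by (simp add: field_simps)
    have e1: "(1::real) - S / A^2 * r^(2*N) = 1 - b * S" by (simp add: b_def)
    have e3: "(a - a * b * S) / a = (pi * r^2 - c * S) / (pi * r^2)" by (simp add: cab a_def)
    have "1 - S / A^2 * r^(2*N) = (pi * r^2 - c * S) / (pi * r^2)" by (simp only: e1 e2 e3)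
    also have "\<dots> \<le> (pi * r^2 - measure lebesgue (ball 1 r - ?L)) / (pi * r^2)"
      using X pr by (intro divide_right_mono) auto
    finally show ?thesis using M ball_measure[of r 1] r by simp
  qed
  have upper: "measure lebesgue (?L \<inter> ball 1 r) / measure lebesgue (ball (1::complex) r) \<le> 1"
    if r: "r > 0" for r
  proof -
    have "measure lebesgue (?L \<inter> ball 1 r) \<le> measure lebesgue (ball (1::complex) r)"
      by (rule measure_mono_fmeasurable) (use Lm in auto)
    moreover have "measure lebesgue (ball (1::complex) r) > 0" using r ball_measure[of r 1] by simp
    ultimately show ?thesis by simp
  qed
  have lim: "((\<lambda>r::real. 1 - S / A^2 * r^(2*N)) \<longlongrightarrow> 1 - S / A^2 * 0^(2*N)) (at_right 0)"
    by (intro tendsto_intros)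
  have z: "(0::real)^(2*N) = 0" using N by simp
  have lim2: "((\<lambda>r::real. 1 - S / A^2 * r^(2*N)) \<longlongrightarrow> 1) (at_right 0)"
    using lim unfolding z by simp
  show ?thesis
  proof (rule tendsto_sandwich[OF _ _ lim2 tendsto_const])
    show "\<forall>\<^sub>F r in at_right 0. 1 - S / A^2 * r^(2*N) \<le>
          measure lebesgue (?L \<inter> ball 1 r) / measure lebesgue (ball (1::complex) r)"
      by (rule eventually_at_rightI[of 0 1]) (use lower in auto)
    show "\<forall>\<^sub>F r in at_right 0. measure lebesgue (?L \<inter> ball 1 r) / measure lebesgue (ball (1::complex) r) \<le> 1"
      by (rule eventually_at_rightI[of 0 1]) (use upper in auto)
  qed
qed


lemma isCont_cis': "isCont cis x"
proof -
  have "cis = (\<lambda>b. exp (\<i> * complex_of_real b))" by (rule ext) (simp add: cis_conv_exp)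
  moreover have "isCont (\<lambda>b. exp (\<i> * complex_of_real b)) x" by (intro continuous_intros)
  ultimately show ?thesis by simp
qed
lemma cont_on_cis: "continuous_on UNIV cis"
  by (simp add: continuous_at_imp_continuous_on isCont_cis')

lemma part2:
  fixes \<omega> :: "real ^ 'd" and \<tau> A :: real and N :: nat
  assumes A: "A > 0" and N: "N \<ge> 1" and t: "\<tau> > real CARD('d)"
  shows "((\<lambda>r. measure lebesgue {\<theta> \<in> {-r..r}. cis \<theta> \<in> Lam A \<omega> \<tau> N} / (2 * r))
              \<longlongrightarrow> 1) (at_right 0)"
proof -
  obtain e :: "nat \<Rightarrow> int ^ 'd" where e: "bij_betw e UNIV {k. k \<noteq> 0}" by (rule enum_K)
  define w where "w n = l1norm (e n) powr (-\<tau>)" for n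
  have ws: "summable w" unfolding w_def by (rule summable_enum[OF e t])
  have w0: "\<And>n. w n \<ge> 0" by (simp add: w_def)
  define S where "S = suminf w"
  have S0: "S \<ge> 0" using ws w0 by (simp add: S_def suminf_nonneg)
  have ek: "\<And>n. e n \<noteq> 0" using e by (auto simp: bij_betw_def)
  have ek2: "\<And>k. k \<noteq> 0 \<Longrightarrow> \<exists>n. e n = k"
  proof -
    fix k :: "int ^ 'd" assume "k \<noteq> 0"
    then have "k \<in> e ` UNIV" using e by (simp add: bij_betw_def)
    then show "\<exists>n. e n = k" by blast
  qed
  let ?L = "Lam A \<omega> \<tau> N"
  define T where "T r = {\<theta> \<in> {-r..r}. cis \<theta> \<in> ?L}" for r :: real
  have Tm: "T r \<in> sets lebesgue" for r
  proof -
    have "T r = {-r..r} \<inter> cis -` ?L" by (auto simp: T_def)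
    moreover have "closed ({-r..r} \<inter> cis -` ?L)"
      by (intro closed_Int closed_atLeastAtMost continuous_closed_vimage Lam_closed[OF A] isCont_cis')
    ultimately show ?thesis using closed_leb by simp
  qed
  have lower: "1 - 4 * S / A * r^N \<le> measure lebesgue (T r) / (2 * r)"
    if r: "r > 0" "r < 1" for r
  proof -
    define \<rho> where "\<rho> n = r^(N+1) / (A * l1norm (e n) powr \<tau>)" for n
    have P: "l1norm (e n) powr \<tau> > 0" for n
    proof -
      have "l1norm (e n) \<ge> 1" by (rule l1norm_ge1[OF ek[of n]])
      then show ?thesis by simp
    qed
    have \<rho>0: "\<And>n. \<rho> n > 0" using P A r by (simp add: \<rho>_def)
    define J where "J n = {-r..r} \<inter> {\<theta>. cmod (zz \<omega> (e n) - cis \<theta>) < \<rho> n}" for n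
    have Jm: "J n \<in> sets lebesgue" for n
    proof -
      have "open {\<theta>. cmod (zz \<omega> (e n) - cis \<theta>) < \<rho> n}"
        by (intro open_Collect_less continuous_intros cont_on_cis)
      then show ?thesis unfolding J_def
        by (intro sets.Int closed_leb open_leb) auto
    qed
    have sub: "{-r..r} - T r \<subseteq> (\<Union>n. J n)"
    proof
      fix \<theta> assume th: "\<theta> \<in> {-r..r} - T r"
      then have th1: "\<theta> \<in> {-r..r}" and th2: "cis \<theta> \<notin> ?L" by (auto simp: T_def)
      then obtain k where k: "k \<noteq> 0" and
        lt: "\<not> cmod (cis \<theta> - 1) ^ (N+1) \<le> A * cmod (zz \<omega> k - cis \<theta>) * l1norm k powr \<tau>"
        using Lam_iff[OF A] by blast
      obtain n where n: "e n = k" using ek2[OF k] by blast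
      have d: "cmod (cis \<theta> - 1) \<le> r" using cis_upper[of \<theta>] th1 by auto
      have "cmod (cis \<theta> - 1) ^ (N+1) \<le> r ^ (N+1)" using d by (intro power_mono) auto
      then have "A * cmod (zz \<omega> (e n) - cis \<theta>) * l1norm (e n) powr \<tau> < r ^ (N+1)" using lt n by simp
      then have "cmod (zz \<omega> (e n) - cis \<theta>) < \<rho> n"
        using A P[of n] by (simp add: \<rho>_def field_simps)
      then have "\<theta> \<in> J n" using th1 by (simp add: J_def)
      then show "\<theta> \<in> (\<Union>n. J n)" by blast
    qed
    define c where "c = 8 * r^(N+1) / A"
    have c0: "c \<ge> 0" using A r by (simp add: c_def)
    have em: "emeasure lebesgue (J n) \<le> ennreal (c * w n)" for n
    proof (cases "J n = {}")
      case True then show ?thesis by simp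
    next
      case False
      then obtain \<theta>0 where t0: "\<theta>0 \<in> J n" by blast
      have "J n \<subseteq> {\<theta>0 - 4 * \<rho> n .. \<theta>0 + 4 * \<rho> n}"
      proof
        fix \<theta> assume th: "\<theta> \<in> J n"
        have b2: "\<bar>\<theta> - \<theta>0\<bar> \<le> 2" using th t0 r by (auto simp: J_def)
        have "cmod (cis \<theta> - cis \<theta>0) \<le> cmod (cis \<theta> - zz \<omega> (e n)) + cmod (zz \<omega> (e n) - cis \<theta>0)"
          using norm_triangle_ineq[of "cis \<theta> - zz \<omega> (e n)" "zz \<omega> (e n) - cis \<theta>0"] by simp
        also have "\<dots> < 2 * \<rho> n" using th t0 by (simp add: J_def norm_minus_commute)
        finally have "\<bar>\<theta> - \<theta>0\<bar> < 4 * \<rho> n" using cis_lower[OF b2] by simp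
        then show "\<theta> \<in> {\<theta>0 - 4 * \<rho> n .. \<theta>0 + 4 * \<rho> n}" by auto
      qed
      then have "emeasure lebesgue (J n) \<le> emeasure lebesgue {\<theta>0 - 4 * \<rho> n .. \<theta>0 + 4 * \<rho> n}"
        by (intro emeasure_mono) (simp_all add: closed_leb)
      also have "\<dots> = ennreal (8 * \<rho> n)" using \<rho>0[of n] by simp
      also have "8 * \<rho> n = c * w n"
        unfolding \<rho>_def c_def w_def using A P[of n] by (simp add: powr_minus field_simps)
      finally show ?thesis .
    qed
    have U: "emeasure lebesgue (\<Union>n. J n) \<le> ennreal (c * S)"
      unfolding S_def by (rule union_bound[OF Jm em ws w0 c0])
    have Usets: "(\<Union>n. J n) \<in> sets lebesgue" using Jm by auto
    have "emeasure lebesgue ({-r..r} - T r) \<le> emeasure lebesgue (\<Union>n. J n)"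
      by (rule emeasure_mono[OF sub Usets])
    then have E: "emeasure lebesgue ({-r..r} - T r) \<le> ennreal (c * S)" using U by simp
    have X: "measure lebesgue ({-r..r} - T r) \<le> c * S"
      unfolding measure_def by (rule enn2real_leI) (use E c0 S0 in auto)
    have bf: "{-r..r} \<in> fmeasurable lebesgue" by simp
    have Dm: "{-r..r} - T r \<in> sets lebesgue" using Tm by (intro sets.Diff) (simp_all add: closed_leb)
    have "T r = {-r..r} - ({-r..r} - T r)" by (auto simp: T_def)
    then have M: "measure lebesgue (T r) = 2 * r - measure lebesgue ({-r..r} - T r)"
      using measurable_measure_Diff[OF bf Dm] r by simp
    define a where "a = 2 * r"
    define b where "b = 4 * r^N / A"
    have cab: "c = a * b" by (simp add: c_def a_def b_def)
    have a0: "a \<noteq> 0" using r unfolding a_def by linarith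
    have e2: "1 - b * S = (a - a * b * S) / a" using a0 by (simp add: field_simps)
    have e1: "(1::real) - 4 * S / A * r^N = 1 - b * S" by (simp add: b_def)
    have e3: "(a - a * b * S) / a = (2 * r - c * S) / (2 * r)" by (simp add: cab a_def)
    have "1 - 4 * S / A * r^N = (2 * r - c * S) / (2 * r)" by (simp only: e1 e2 e3)
    also have "\<dots> \<le> (2 * r - measure lebesgue ({-r..r} - T r)) / (2 * r)"
      using X r by (intro divide_right_mono) auto
    finally show ?thesis using M by simp
  qed
  have upper: "measure lebesgue (T r) / (2 * r) \<le> 1" if r: "r > 0" for r
  proof -
    have "measure lebesgue (T r) \<le> measure lebesgue {-r..r}"
      by (rule measure_mono_fmeasurable) (use Tm in \<open>auto simp: T_def\<close>)
    then show ?thesis using r by simp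
  qed
  have lim: "((\<lambda>r::real. 1 - 4 * S / A * r^N) \<longlongrightarrow> 1 - 4 * S / A * 0^N) (at_right 0)"
    by (intro tendsto_intros)
  have z: "(0::real)^N = 0" using N by simp
  have lim2: "((\<lambda>r::real. 1 - 4 * S / A * r^N) \<longlongrightarrow> 1) (at_right 0)"
    using lim unfolding z by simp
  have "((\<lambda>r. measure lebesgue (T r) / (2 * r)) \<longlongrightarrow> 1) (at_right 0)"
  proof (rule tendsto_sandwich[OF _ _ lim2 tendsto_const])
    show "\<forall>\<^sub>F r in at_right 0. 1 - 4 * S / A * r^N \<le> measure lebesgue (T r) / (2 * r)"
      by (rule eventually_at_rightI[of 0 1]) (use lower in auto)
    show "\<forall>\<^sub>F r in at_right 0. measure lebesgue (T r) / (2 * r) \<le> 1"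
      by (rule eventually_at_rightI[of 0 1]) (use upper in auto)
  qed
  then show ?thesis by (simp add: T_def)
qed


theorem mainTheorem5:
  fixes \<omega> :: "real ^ 'd" and \<tau> A :: real and N :: nat
  assumes "nu \<omega> \<tau> < \<infinity>" and "A > 0" and "N \<ge> 1"
  shows "(2 * \<tau> > real CARD('d) \<longrightarrow>
           ((\<lambda>r. measure lebesgue (Lam A \<omega> \<tau> N \<inter> ball 1 r) / measure lebesgue (ball (1::complex) r))
              \<longlongrightarrow> 1) (at_right 0))
       \<and> (\<tau> > real CARD('d) \<longrightarrow>
           ((\<lambda>r. measure lebesgue {\<theta> \<in> {-r..r}. cis \<theta> \<in> Lam A \<omega> \<tau> N} / (2 * r))
              \<longlongrightarrow> 1) (at_right 0))"
  using part1[OF assms(2,3)] part2[OF assms(2,3)] by blast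

end
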